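(* Let $k\ge1$, $1\le l\le k$, and suppose $\delta\notin\bigcup_{j=1}^kI_j$, where $I_j=\{-\frac{p}{2(n+1)}:p\in\{j-1,\dots,2j-2\}\}$. Then the restriction of $s^l=s_{k-1}\circ\cdots\circ s_{k-l}$ to $R^{k-l}\cap\ker i(\alpha)$ equals $c(l,k-l)\,X^l$, where \[c(l,k-l)=\Big(\prod_{i=1}^lr(i,k-l)\Big)^{-1}.\]
   Context: Let $n\ge1$, $M=\mathbb{R}^{2n+1}$ with coordinates $(q^1,\dots,q^n,p^1,\dots,p^n,t)$. For $\mu\in\mathbb{R}$, $\mathcal{S}^k_\mu$ denotes the space of smooth functions $S(x,\xi)$ on $M\times\mathbb{R}^{2n+1}$ homogeneous polynomial of degree $k$ in $\xi=(\xi_{q^1},\dots,\xi_{q^n},\xi_{p^1},\dots,\xi_{p^n},\xi_t)$. Fix $\delta\in\mathbb{R}$ and set $R^k=\mathcal{S}^k_{\delta+\frac{k}{n+1}}$ for $k\ge0$, $R^{j}=0$ for $j<0$. Let $E_s=\sum_i(p^i\partial_{p^i}+q^i\partial_{q^i})$, $\langle E_s,\xi\rangle=\sum_i(p^i\xi_{p^i}+q^i\xi_{q^i})$, $D(S)=\sum_i(\xi_{q^i}\partial_{p^i}S-\xi_{p^i}\partial_{q^i}S)+\xi_tE_s(S)-\langle E_s,\xi\rangle\partial_tS$. Operators: $i(\alpha):R^k\to R^{k-1}$, $i(\alpha)(S)=\frac12\big(\sum_i(p^i\partial_{\xi_{q^i}}S-q^i\partial_{\xi_{p^i}}S)-\partial_{\xi_t}S\big)$;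 $X:R^k\to R^{k+1}$, $X(S)=D(S)+(2(n+1)\delta+k)\xi_tS$. Set $r(l,k)=-\frac{l}{2}\big(2(n+1)\delta+2k+l-1\big)$. For $j\ge1$ with $\delta\notin I_j$, $s_{j-1}:R^{j-1}\to R^j$ is $s_{j-1}(S)=-\sum_{l=1}^jb_{j,l}X^l(i(\alpha)^{l-1}(S))$ with $b_{j,l}=\big(\prod_{m=1}^l(-r(m,j-m))\big)^{-1}$. *)

theory Defs
  imports "HOL-Analysis.Analysis"
begin

definition pdir :: "('a::real_normed_vector \<Rightarrow> real) \<Rightarrow> 'a \<Rightarrow> 'a \<Rightarrow> real" where
  "pdir f v = (\<lambda>z. deriv (\<lambda>h. f (z + h *\<^sub>R v)) 0)"

definition smooth :: "('a::euclidean_space \<Rightarrow> real) \<Rightarrow> bool" where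
  "smooth f \<longleftrightarrow> (\<forall>vs. set vs \<subseteq> Basis \<longrightarrow>
      (\<forall>z. (foldr (\<lambda>v g. pdir g v) vs f) differentiable (at z)))"

definition multi_idx :: "nat \<Rightarrow> ('a::euclidean_space \<Rightarrow> nat) set" where
  "multi_idx k = {\<alpha>. (\<forall>b. b \<notin> Basis \<longrightarrow> \<alpha> b = 0) \<and> (\<Sum>b\<in>Basis. \<alpha> b) = k}"

definition monom_xi :: "('a::euclidean_space \<Rightarrow> nat) \<Rightarrow> 'a \<Rightarrow> real" where
  "monom_xi \<alpha> \<xi> = (\<Prod>b\<in>Basis. (\<xi> \<bullet> b) ^ \<alpha> b)"

section \<open>The setting: M = R^(2n+1), coordinates (q,p,t), n = CARD('n)\<close>

type_synonym 'n pt = "(real^'n) \<times> (real^'n) \<times> real"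
type_synonym 'n symb = "'n pt \<times> 'n pt \<Rightarrow> real"

definition qc :: "'n::finite pt \<Rightarrow> 'n \<Rightarrow> real" where "qc x i = fst x $ i"
definition pc :: "'n::finite pt \<Rightarrow> 'n \<Rightarrow> real" where "pc x i = fst (snd x) $ i"
definition tc :: "'n::finite pt \<Rightarrow> real" where "tc x = snd (snd x)"

definition eq :: "'n::finite \<Rightarrow> 'n pt" where "eq i = (axis i 1, 0, 0)"
definition ep :: "'n::finite \<Rightarrow> 'n pt" where "ep i = (0, axis i 1, 0)"
definition et :: "'n::finite pt" where "et = (0, 0, 1)"

definition dx :: "'n::finite symb \<Rightarrow> 'n pt \<Rightarrow> 'n symb" where
  "dx S v = pdir S (v, 0)"
definition dxi :: "'n::finite symb \<Rightarrow> 'n pt \<Rightarrow> 'n symb" where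
  "dxi S v = pdir S (0, v)"

text \<open>The space S^k_mu (as a space of functions it does not depend on the weight mu):
  smooth functions on M x R^(2n+1), homogeneous polynomial of degree k in xi
  with smooth coefficients.\<close>
definition Sk :: "nat \<Rightarrow> 'n::finite symb set" where
  "Sk k = {S. smooth S \<and>
     (\<exists>a. (\<forall>\<alpha>\<in>multi_idx k. smooth (a \<alpha>)) \<and>
          (\<forall>x \<xi>. S (x, \<xi>) = (\<Sum>\<alpha>\<in>multi_idx k. a \<alpha> x * monom_xi \<alpha> \<xi>)))}"

text \<open>R^k = S^k_{delta + k/(n+1)}, k \<ge> 0.\<close>
definition Rsp :: "real \<Rightarrow> nat \<Rightarrow> 'n::finite symb set" where
  "Rsp \<delta> k = Sk k"

definition Es :: "'n::finite symb \<Rightarrow> 'n symb" where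
  "Es S = (\<lambda>(x, \<xi>). \<Sum>i\<in>UNIV. pc x i * dx S (ep i) (x, \<xi>) + qc x i * dx S (eq i) (x, \<xi>))"

definition Es_xi :: "'n::finite pt \<Rightarrow> 'n pt \<Rightarrow> real" where
  "Es_xi x \<xi> = (\<Sum>i\<in>UNIV. pc x i * pc \<xi> i + qc x i * qc \<xi> i)"

definition Dop :: "'n::finite symb \<Rightarrow> 'n symb" where
  "Dop S = (\<lambda>(x, \<xi>).
     (\<Sum>i\<in>UNIV. qc \<xi> i * dx S (ep i) (x, \<xi>) - pc \<xi> i * dx S (eq i) (x, \<xi>))
     + tc \<xi> * Es S (x, \<xi>) - Es_xi x \<xi> * dx S et (x, \<xi>))"

definition ialpha :: "'n::finite symb \<Rightarrow> 'n symb" where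
  "ialpha S = (\<lambda>(x, \<xi>). 1/2 * ((\<Sum>i\<in>UNIV. pc x i * dxi S (eq i) (x, \<xi>)
                                     - qc x i * dxi S (ep i) (x, \<xi>))
                                 - dxi S et (x, \<xi>)))"

text \<open>X : R^k \<rightarrow> R^(k+1), depends on the degree k of its argument.\<close>
definition Xop :: "real \<Rightarrow> nat \<Rightarrow> 'n::finite symb \<Rightarrow> 'n symb" where
  "Xop \<delta> k S = (\<lambda>(x, \<xi>). Dop S (x, \<xi>)
      + (2 * (real CARD('n) + 1) * \<delta> + real k) * tc \<xi> * S (x, \<xi>))"

text \<open>X^l applied to an element of R^m: X_(m+l-1) o ... o X_m.\<close>
primrec Xpow :: "real \<Rightarrow> nat \<Rightarrow> nat \<Rightarrow> 'n::finite symb \<Rightarrow> 'n symb" where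
  "Xpow \<delta> m 0 S = S"
| "Xpow \<delta> m (Suc l) S = Xop \<delta> (m + l) (Xpow \<delta> m l S)"

definition rr :: "nat \<Rightarrow> real \<Rightarrow> nat \<Rightarrow> nat \<Rightarrow> real" where
  "rr n \<delta> l k = - (real l / 2) * (2 * (real n + 1) * \<delta> + 2 * real k + real l - 1)"

definition bb :: "nat \<Rightarrow> real \<Rightarrow> nat \<Rightarrow> nat \<Rightarrow> real" where
  "bb n \<delta> j l = inverse (\<Prod>m=1..l. - rr n \<delta> m (j - m))"

definition Iset :: "nat \<Rightarrow> nat \<Rightarrow> real set" where
  "Iset n j = {- real p / (2 * (real n + 1)) | p. p \<in> {j - 1 .. 2 * j - 2}}"

text \<open>s_d : R^d \<rightarrow> R^(d+1) (this is s_(j-1) with j = d+1).\<close>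
definition sop :: "real \<Rightarrow> nat \<Rightarrow> 'n::finite symb \<Rightarrow> 'n symb" where
  "sop \<delta> d S = (\<lambda>z. - (\<Sum>l=1..d+1. bb CARD('n) \<delta> (d+1) l
                        * Xpow \<delta> (d + 1 - l) l ((ialpha ^^ (l - 1)) S) z))"

text \<open>s^l on R^m: s_(m+l-1) o ... o s_m.\<close>
primrec spow :: "real \<Rightarrow> nat \<Rightarrow> nat \<Rightarrow> 'n::finite symb \<Rightarrow> 'n symb" where
  "spow \<delta> m 0 S = S"
| "spow \<delta> m (Suc l) S = sop \<delta> (m + l) (spow \<delta> m l S)"

end

theory Submission
  imports Defs
begin


lemma pdir_hasderiv:
  assumes "(f has_derivative f') (at z)"
  shows "pdir f v z = f' v"
proof -
  have d1: "((\<lambda>h::real. z + h *\<^sub>R v) has_derivative (\<lambda>h. h *\<^sub>R v)) (at 0)"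
    by (auto intro!: derivative_eq_intros)
  have "((\<lambda>h. f (z + h *\<^sub>R v)) has_derivative (\<lambda>h. f' (h *\<^sub>R v))) (at 0)"
    using has_derivative_compose[OF d1, of f f'] assms by simp
  moreover have "(\<lambda>h. f' (h *\<^sub>R v)) = (*) (f' v)"
    using has_derivative_linear[OF assms] by (auto simp: linear_scale)
  ultimately have "DERIV (\<lambda>h. f (z + h *\<^sub>R v)) 0 :> f' v"
    by (simp add: has_field_derivative_def)
  then show ?thesis unfolding pdir_def by (rule DERIV_imp_deriv)
qed

definition FD :: "('a::real_normed_vector \<Rightarrow> real) \<Rightarrow> 'a \<Rightarrow> 'a \<Rightarrow> real" where
  "FD f z = frechet_derivative f (at z)"

lemma FD_works: "f differentiable (at z) \<Longrightarrow> (f has_derivative FD f z) (at z)"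
  unfolding FD_def by (simp add: frechet_derivative_works[symmetric])

lemma pdir_FD: "f differentiable (at z) \<Longrightarrow> pdir f v z = FD f z v"
  by (rule pdir_hasderiv[OF FD_works])

lemma pdir_const[simp]: "pdir (\<lambda>z. c) v = (\<lambda>z. 0)"
  by (rule ext, rule pdir_hasderiv) (auto intro: derivative_eq_intros)

coinductive sm :: "('a::euclidean_space \<Rightarrow> real) \<Rightarrow> bool" where
  "(\<forall>z. f differentiable (at z)) \<Longrightarrow> (\<forall>b\<in>Basis. sm (pdir f b)) \<Longrightarrow> sm f"

lemma sm_diff: "sm f \<Longrightarrow> f differentiable (at z)"
  by (erule sm.cases) auto

lemma sm_pdir: "sm f \<Longrightarrow> b \<in> Basis \<Longrightarrow> sm (pdir f b)"
  by (erule sm.cases) auto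

lemma sm_const: "sm (\<lambda>z. c)"
proof -
  have "\<exists>c. f = (\<lambda>z. c) \<Longrightarrow> sm f" for f :: "'a \<Rightarrow> real"
    by (coinduction arbitrary: f) auto
  then show ?thesis by blast
qed

lemma hd_sumprod:
  assumes "\<forall>(f,g)\<in>set L. f differentiable (at z) \<and> g differentiable (at z)"
  shows "((\<lambda>z. \<Sum>(f,g)\<leftarrow>L. f z * g z) has_derivative
          (\<lambda>h. \<Sum>(f,g)\<leftarrow>L. f z * FD g z h + FD f z h * g z)) (at z)"
  using assms
proof (induction L)
  case Nil then show ?case by (simp add: has_derivative_const)
next
  case (Cons a L)
  obtain f g where a: "a = (f,g)" by force
  have f: "(f has_derivative FD f z) (at z)" and g: "(g has_derivative FD g z) (at z)"
    using Cons.prems a by (auto intro: FD_works)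
  have "((\<lambda>z. f z * g z + (\<Sum>(f,g)\<leftarrow>L. f z * g z)) has_derivative
       (\<lambda>h. (f z * FD g z h + FD f z h * g z) + (\<Sum>(f,g)\<leftarrow>L. f z * FD g z h + FD f z h * g z))) (at z)"
    by (rule has_derivative_add[OF has_derivative_mult[OF f g] Cons.IH]) (use Cons.prems in auto)
  then show ?case using a by simp
qed

lemma sm_sumprod_aux:
  assumes "\<forall>(f,g)\<in>set L. sm f \<and> sm g" and "h = (\<lambda>z. \<Sum>(f,g)\<leftarrow>L. f z * g z)"
  shows "sm h"
  using assms
proof (coinduction arbitrary: h L)
  case sm
  have diff: "\<forall>(f,g)\<in>set L. f differentiable (at z) \<and> g differentiable (at z)" for z
    using sm(1) by (auto intro: sm_diff)
  have "h differentiable (at z)" for z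
    using hd_sumprod[OF diff[of z]] sm(2) unfolding differentiable_def by blast
  moreover have "\<exists>h' L'. pdir h b = h' \<and> (\<forall>(f,g)\<in>set L'. sm f \<and> sm g) \<and> h' = (\<lambda>z. \<Sum>(f,g)\<leftarrow>L'. f z * g z)"
    if b: "b \<in> Basis" for b
  proof (intro exI conjI)
    let ?L' = "concat (map (\<lambda>(f,g). [(f, pdir g b), (pdir f b, g)]) L)"
    show "\<forall>(f,g)\<in>set ?L'. sm f \<and> sm g" using sm(1) b by (auto intro: sm_pdir)
    have "pdir h b z = (\<Sum>(f,g)\<leftarrow>?L'. f z * g z)" for z
    proof -
      have "pdir h b z = (\<Sum>(f,g)\<leftarrow>L. f z * FD g z b + FD f z b * g z)"
        using hd_sumprod[OF diff[of z]] sm(2) by (simp add: pdir_hasderiv)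
      also have "\<dots> = (\<Sum>(f,g)\<leftarrow>L. f z * pdir g b z + pdir f b z * g z)"
        using diff[of z] by (intro arg_cong[where f=sum_list] map_cong) (auto simp: pdir_FD)
      also have "\<dots> = (\<Sum>(f,g)\<leftarrow>?L'. f z * g z)"
        by (induction L) auto
      finally show ?thesis .
    qed
    then show "pdir h b = (\<lambda>z. \<Sum>(f,g)\<leftarrow>?L'. f z * g z)" by auto
  qed rule
  ultimately show ?case by blast
qed

lemma sm_mult: "sm f \<Longrightarrow> sm g \<Longrightarrow> sm (\<lambda>z. f z * g z)"
  by (rule sm_sumprod_aux[of "[(f,g)]"]) auto

lemma sm_add: "sm f \<Longrightarrow> sm g \<Longrightarrow> sm (\<lambda>z. f z + g z)"
  by (rule sm_sumprod_aux[of "[(f,\<lambda>_. 1), (g, \<lambda>_. 1)]"]) (auto simp: sm_const)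

lemma sm_linear: "bounded_linear f \<Longrightarrow> sm f"
proof (rule sm.intros)
  assume "bounded_linear f"
  then have hd: "(f has_derivative f) (at z)" for z by (rule bounded_linear_imp_has_derivative)
  then show "\<forall>z. f differentiable (at z)" unfolding differentiable_def by blast
  have "pdir f b = (\<lambda>z. f b)" for b using hd by (auto simp: pdir_hasderiv)
  then show "\<forall>b\<in>Basis. sm (pdir f b)" by (auto simp: sm_const)
qed

lemma sm_sum: "finite A \<Longrightarrow> (\<And>i. i \<in> A \<Longrightarrow> sm (f i)) \<Longrightarrow> sm (\<lambda>z. \<Sum>i\<in>A. f i z)"
  by (induction A rule: finite_induct) (auto simp: sm_const intro: sm_add)

lemma sm_prod: "finite A \<Longrightarrow> (\<And>i. i \<in> A \<Longrightarrow> sm (f i)) \<Longrightarrow> sm (\<lambda>z. \<Prod>i\<in>A. f i z)"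
  by (induction A rule: finite_induct) (auto simp: sm_const intro: sm_mult)

lemma sm_power: "sm f \<Longrightarrow> sm (\<lambda>z. f z ^ n)"
  by (induction n) (auto simp: sm_const intro: sm_mult)

lemma smooth_sm: "smooth (f::'a::euclidean_space \<Rightarrow> real) \<Longrightarrow> sm f"
proof (coinduction arbitrary: f)
  case sm
  have "f differentiable (at z)" for z
    using sm unfolding smooth_def by (metis empty_subsetI foldr_Nil id_apply list.set(1))
  moreover have "smooth (pdir f b)" if "b \<in> Basis" for b
    unfolding smooth_def
  proof (intro allI impI)
    fix vs :: "'a list" and z :: 'a assume "set vs \<subseteq> Basis"
    then have "set (vs @ [b]) \<subseteq> Basis" using that by auto
    then have "(foldr (\<lambda>v g. pdir g v) (vs @ [b]) f) differentiable (at z)"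
      using sm unfolding smooth_def by blast
    then show "(foldr (\<lambda>v g. pdir g v) vs (pdir f b)) differentiable (at z)" by simp
  qed
  ultimately show ?case by blast
qed



lemma Basis_eq: "eq i \<in> (Basis :: 'n::finite pt set)"
  by (auto simp: eq_def Basis_prod_def Basis_vec_def image_iff zero_prod_def)
lemma Basis_ep: "ep i \<in> (Basis :: 'n::finite pt set)"
  by (auto simp: ep_def Basis_prod_def Basis_vec_def image_iff zero_prod_def)
lemma Basis_et: "et \<in> (Basis :: 'n::finite pt set)"
  by (auto simp: et_def Basis_prod_def Basis_vec_def)

lemma bl_qc: "bounded_linear (\<lambda>x::'n::finite pt. qc x i)"
  unfolding qc_def by (intro bounded_linear_compose[OF bounded_linear_vec_nth] bounded_linear_fst)
lemma bl_pc: "bounded_linear (\<lambda>x::'n::finite pt. pc x i)"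
  unfolding pc_def by (intro bounded_linear_compose[OF bounded_linear_vec_nth] bounded_linear_compose[OF bounded_linear_fst] bounded_linear_snd)
lemma bl_tc: "bounded_linear (\<lambda>x::'n::finite pt. tc x)"
  unfolding tc_def by (intro bounded_linear_compose[OF bounded_linear_snd] bounded_linear_snd)

lemma sm_qc: "sm (\<lambda>x::'n::finite pt. qc x i)" by (rule sm_linear[OF bl_qc])
lemma sm_pc: "sm (\<lambda>x::'n::finite pt. pc x i)" by (rule sm_linear[OF bl_pc])
lemma sm_tc: "sm (\<lambda>x::'n::finite pt. tc x)" by (rule sm_linear[OF bl_tc])

lemma sm_monom: "sm (monom_xi \<alpha>)"
proof -
  have "sm (\<lambda>\<xi>::'a. \<Prod>b\<in>Basis. (\<xi> \<bullet> b) ^ \<alpha> b)"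
    by (intro sm_prod sm_power sm_linear bounded_linear_inner_left) auto
  then show ?thesis unfolding monom_xi_def[abs_def] .
qed

lemma hd_fst: "(a has_derivative a') (at (fst z)) \<Longrightarrow> ((\<lambda>z. a (fst z)) has_derivative (\<lambda>h. a' (fst h))) (at z)"
  using has_derivative_compose[OF bounded_linear_imp_has_derivative[OF bounded_linear_fst], of a a' z] by simp
lemma hd_snd: "(a has_derivative a') (at (snd z)) \<Longrightarrow> ((\<lambda>z. a (snd z)) has_derivative (\<lambda>h. a' (snd h))) (at z)"
  using has_derivative_compose[OF bounded_linear_imp_has_derivative[OF bounded_linear_snd], of a a' z] by simp

lemma pdir_add: "f differentiable (at z) \<Longrightarrow> g differentiable (at z) \<Longrightarrow>
   pdir (\<lambda>z. f z + g z) v z = pdir f v z + pdir g v z"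
proof -
  assume a: "f differentiable (at z)" "g differentiable (at z)"
  have "pdir (\<lambda>z. f z + g z) v z = FD f z v + FD g z v"
    by (rule pdir_hasderiv[OF has_derivative_add[OF FD_works[OF a(1)] FD_works[OF a(2)]]])
  then show ?thesis using a by (simp add: pdir_FD)
qed
lemma pdir_diff: "f differentiable (at z) \<Longrightarrow> g differentiable (at z) \<Longrightarrow>
   pdir (\<lambda>z. f z - g z) v z = pdir f v z - pdir g v z"
proof -
  assume a: "f differentiable (at z)" "g differentiable (at z)"
  have "pdir (\<lambda>z. f z - g z) v z = FD f z v - FD g z v"
    by (rule pdir_hasderiv[OF has_derivative_diff[OF FD_works[OF a(1)] FD_works[OF a(2)]]])
  then show ?thesis using a by (simp add: pdir_FD)
qed
lemma pdir_scale: "f differentiable (at z) \<Longrightarrow> pdir (\<lambda>z. c * f z) v z = c * pdir f v z"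
proof -
  assume a: "f differentiable (at z)"
  have "pdir (\<lambda>z. c * f z) v z = c * FD f z v"
    by (rule pdir_hasderiv[OF has_derivative_mult_right[OF FD_works[OF a]]])
  then show ?thesis using a by (simp add: pdir_FD)
qed

inductive good :: "'n::finite symb \<Rightarrow> bool" where
  gprod: "sm a \<Longrightarrow> sm g \<Longrightarrow> good (\<lambda>z. a (fst z) * g (snd z))"
| gadd: "good f \<Longrightarrow> good g \<Longrightarrow> good (\<lambda>z. f z + g z)"

lemma hd_prodform:
  assumes "a differentiable (at (fst z))" "g differentiable (at (snd z))"
  shows "((\<lambda>z. a (fst z) * g (snd z)) has_derivative
     (\<lambda>h. a (fst z) * FD g (snd z) (snd h) + FD a (fst z) (fst h) * g (snd z))) (at z)"
  by (rule has_derivative_mult[OF hd_fst[OF FD_works[OF assms(1)]] hd_snd[OF FD_works[OF assms(2)]]])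

lemma good_diffble: "good f \<Longrightarrow> f differentiable (at z)"
proof (induction rule: good.induct)
  case (gprod a g)
  then show ?case using hd_prodform[where a=a and g=g and z=z] sm_diff unfolding differentiable_def by blast
next
  case (gadd f g) then show ?case by (auto intro: differentiable_compose)
qed

lemma dx_prodform: "sm a \<Longrightarrow> sm g \<Longrightarrow> dx (\<lambda>z. a (fst z) * g (snd z)) e = (\<lambda>z. pdir a e (fst z) * g (snd z))"
  unfolding dx_def
  by (rule ext, subst pdir_hasderiv[OF hd_prodform[OF sm_diff sm_diff]])
     (auto simp: pdir_FD sm_diff linear_0[OF has_derivative_linear[OF FD_works[OF sm_diff]]])

lemma dxi_prodform: "sm a \<Longrightarrow> sm g \<Longrightarrow> dxi (\<lambda>z. a (fst z) * g (snd z)) e = (\<lambda>z. a (fst z) * pdir g e (snd z))"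
  unfolding dxi_def
  by (rule ext, subst pdir_hasderiv[OF hd_prodform[OF sm_diff sm_diff]])
     (auto simp: pdir_FD sm_diff linear_0[OF has_derivative_linear[OF FD_works[OF sm_diff]]])

lemma good_dx: "good f \<Longrightarrow> e \<in> Basis \<Longrightarrow> good (dx f e)"
proof (induction rule: good.induct)
  case (gprod a g) then show ?case by (simp add: dx_prodform good.gprod sm_pdir)
next
  case (gadd f g)
  have "dx (\<lambda>z. f z + g z) e = (\<lambda>z. dx f e z + dx g e z)"
    unfolding dx_def using gadd.hyps by (auto simp: pdir_add good_diffble)
  then show ?case using gadd by (simp add: good.gadd)
qed

lemma good_dxi: "good f \<Longrightarrow> e \<in> Basis \<Longrightarrow> good (dxi f e)"
proof (induction rule: good.induct)
  case (gprod a g) then show ?case by (simp add: dxi_prodform good.gprod sm_pdir)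
next
  case (gadd f g)
  have "dxi (\<lambda>z. f z + g z) e = (\<lambda>z. dxi f e z + dxi g e z)"
    unfolding dxi_def using gadd.hyps by (auto simp: pdir_add good_diffble)
  then show ?case using gadd by (simp add: good.gadd)
qed

lemma dx_add: "good f \<Longrightarrow> good g \<Longrightarrow> dx (\<lambda>z. f z + g z) e = (\<lambda>z. dx f e z + dx g e z)"
  unfolding dx_def by (auto simp: pdir_add good_diffble)
lemma dxi_add: "good f \<Longrightarrow> good g \<Longrightarrow> dxi (\<lambda>z. f z + g z) e = (\<lambda>z. dxi f e z + dxi g e z)"
  unfolding dxi_def by (auto simp: pdir_add good_diffble)

lemma good_swap: "good f \<Longrightarrow> e \<in> Basis \<Longrightarrow> w \<in> Basis \<Longrightarrow> dx (dxi f w) e = dxi (dx f e) w"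
proof (induction rule: good.induct)
  case (gprod a g) then show ?case by (simp add: dx_prodform dxi_prodform sm_pdir)
next
  case (gadd f g)
  then show ?case by (simp add: dx_add dxi_add good_dx good_dxi)
qed

lemma good_zero: "good (\<lambda>z. 0)"
  using gprod[OF sm_const sm_const, of 0 0] by simp

lemma good_mult_fst: assumes u: "sm u" and "good f" shows "good (\<lambda>z. u (fst z) * f z)"
  using assms(2)
proof (induction f rule: good.induct)
  case (gprod a g)
  then have "good (\<lambda>z. (\<lambda>x. u x * a x) (fst z) * g (snd z))" using u by (intro good.gprod sm_mult)
  then show ?case by (simp add: mult.assoc)
next
  case (gadd f g)
  then have "good (\<lambda>z. u (fst z) * f z + u (fst z) * g z)" by (intro good.gadd)
  then show ?case by (simp add: distrib_left)
qed

lemma good_mult_snd: assumes u: "sm u" and "good f" shows "good (\<lambda>z. u (snd z) * f z)"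
  using assms(2)
proof (induction f rule: good.induct)
  case (gprod a g)
  then have "good (\<lambda>z. a (fst z) * (\<lambda>x. u x * g x) (snd z))" using u by (intro good.gprod sm_mult)
  then show ?case by (simp add: ac_simps)
next
  case (gadd f g)
  then have "good (\<lambda>z. u (snd z) * f z + u (snd z) * g z)" by (intro good.gadd)
  then show ?case by (simp add: distrib_left)
qed

lemma good_scale: "good f \<Longrightarrow> good (\<lambda>z. c * f z)"
  using good_mult_fst[OF sm_const, of f c] by simp

lemma good_diff: "good f \<Longrightarrow> good g \<Longrightarrow> good (\<lambda>z. f z - g z)"
  using good.gadd[of f "\<lambda>z. (-1) * g z"] good_scale[of g "-1"] by simp

lemma good_sum: "finite A \<Longrightarrow> (\<And>i. i \<in> A \<Longrightarrow> good (f i)) \<Longrightarrow> good (\<lambda>z. \<Sum>i\<in>A. f i z)"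
  by (induction A rule: finite_induct) (auto simp: good_zero intro: good.gadd)

lemma good_qcs: "good f \<Longrightarrow> good (\<lambda>z. qc (snd z) i * f z)" by (rule good_mult_snd[OF sm_qc])
lemma good_pcs: "good f \<Longrightarrow> good (\<lambda>z. pc (snd z) i * f z)" by (rule good_mult_snd[OF sm_pc])
lemma good_tcs: "good f \<Longrightarrow> good (\<lambda>z. tc (snd z) * f z)" by (rule good_mult_snd[OF sm_tc])
lemma good_qcf: "good f \<Longrightarrow> good (\<lambda>z. qc (fst z) i * f z)" by (rule good_mult_fst[OF sm_qc])
lemma good_pcf: "good f \<Longrightarrow> good (\<lambda>z. pc (fst z) i * f z)" by (rule good_mult_fst[OF sm_pc])



lemma hasderiv_line:
  assumes "(f has_derivative f') (at z)"
  shows "DERIV (\<lambda>h. f (z + h *\<^sub>R v)) 0 :> f' v"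
proof -
  have d1: "((\<lambda>h::real. z + h *\<^sub>R v) has_derivative (\<lambda>h. h *\<^sub>R v)) (at 0)"
    by (auto intro!: derivative_eq_intros)
  have "((\<lambda>h. f (z + h *\<^sub>R v)) has_derivative (\<lambda>h. f' (h *\<^sub>R v))) (at 0)"
    using has_derivative_compose[OF d1, of f f'] assms by simp
  moreover have "(\<lambda>h. f' (h *\<^sub>R v)) = (*) (f' v)"
    using has_derivative_linear[OF assms] by (auto simp: linear_scale)
  ultimately show ?thesis by (simp add: has_field_derivative_def)
qed

lemma Es_alt: "Es S = (\<lambda>z. \<Sum>i\<in>UNIV. pc (fst z) i * dx S (ep i) z + qc (fst z) i * dx S (eq i) z)"
  by (rule ext) (simp add: Es_def case_prod_beta)

lemma Dop_alt: "Dop S = (\<lambda>z. (\<Sum>i\<in>UNIV. qc (snd z) i * dx S (ep i) z - pc (snd z) i * dx S (eq i) z)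
     + tc (snd z) * Es S z - Es_xi (fst z) (snd z) * dx S et z)"
  by (rule ext) (simp add: Dop_def case_prod_beta)

lemma Xop_alt: "Xop \<delta> k S = (\<lambda>z. Dop S z + (2 * (real CARD('n) + 1) * \<delta> + real k) * tc (snd z) * S z)"
  for S :: "'n::finite symb"
  by (rule ext) (simp add: Xop_def case_prod_beta)

lemma ialpha_alt: "ialpha S = (\<lambda>z. 1/2 * ((\<Sum>i\<in>UNIV. pc (fst z) i * dxi S (eq i) z
                                     - qc (fst z) i * dxi S (ep i) z) - dxi S et z))"
  by (rule ext) (simp add: ialpha_def case_prod_beta)

lemma Es_xi_mult: "Es_xi (fst z) (snd z) * F z =
   (\<Sum>i\<in>UNIV. pc (fst z) i * (pc (snd z) i * F z) + qc (fst z) i * (qc (snd z) i * F z))"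
  by (simp add: Es_xi_def sum_distrib_right sum_distrib_left algebra_simps)

lemma good_Es: "good S \<Longrightarrow> good (Es S)"
  unfolding Es_alt
  by (intro good_sum good.gadd good_pcf good_qcf good_dx Basis_eq Basis_ep) auto

lemma good_Dop: "good S \<Longrightarrow> good (Dop S)"
  unfolding Dop_alt Es_xi_mult
  by (intro good_sum good.gadd good_diff good_pcf good_qcf good_pcs good_qcs good_tcs good_Es
         good_dx Basis_eq Basis_ep Basis_et) auto

lemma good_Xop: "good S \<Longrightarrow> good (Xop \<delta> k S)"
proof -
  assume g: "good S"
  have "good (\<lambda>z. Dop S z + (2 * (real CARD('a) + 1) * \<delta> + real k) * (tc (snd z) * S z))"
    by (intro good.gadd good_Dop good_scale good_tcs g)
  then show ?thesis unfolding Xop_alt by (simp add: mult.assoc)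
qed

lemma good_Xpow: "good S \<Longrightarrow> good (Xpow \<delta> m l S)"
  by (induction l) (auto intro: good_Xop)

lemma good_ialpha: "good S \<Longrightarrow> good (ialpha S)"
  unfolding ialpha_alt
  by (intro good_scale good_sum good_diff good_pcf good_qcf good_dxi Basis_eq Basis_ep Basis_et) auto

lemma dx_scale: "good f \<Longrightarrow> dx (\<lambda>z. c * f z) e = (\<lambda>z. c * dx f e z)"
  unfolding dx_def by (auto simp: pdir_scale good_diffble)
lemma dxi_scale: "good f \<Longrightarrow> dxi (\<lambda>z. c * f z) e = (\<lambda>z. c * dxi f e z)"
  unfolding dxi_def by (auto simp: pdir_scale good_diffble)

lemma Es_scale: "good f \<Longrightarrow> Es (\<lambda>z. c * f z) = (\<lambda>z. c * Es f z)"
  by (simp add: Es_alt dx_scale sum_distrib_left algebra_simps)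
lemma Dop_scale: "good f \<Longrightarrow> Dop (\<lambda>z. c * f z) = (\<lambda>z. c * Dop f z)"
  by (simp add: Dop_alt dx_scale Es_scale sum_distrib_left algebra_simps)
lemma Xop_scale: "good f \<Longrightarrow> Xop \<delta> k (\<lambda>z. c * f z) = (\<lambda>z. c * Xop \<delta> k f z)"
  by (simp add: Xop_alt Dop_scale algebra_simps)
lemma ialpha_scale: "good f \<Longrightarrow> ialpha (\<lambda>z. c * f z) = (\<lambda>z. c * ialpha f z)"
  by (simp add: ialpha_alt dxi_scale sum_distrib_left algebra_simps)
lemma Xpow_scale: "good f \<Longrightarrow> Xpow \<delta> m l (\<lambda>z. c * f z) = (\<lambda>z. c * Xpow \<delta> m l f z)"
  by (induction l) (auto simp: Xop_scale good_Xpow)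

lemma Xpow_zero: "Xpow \<delta> m l (\<lambda>z. 0) = (\<lambda>z. 0)"
  using Xpow_scale[OF good_zero, of \<delta> m l 0] by simp
lemma ialpha_zero: "ialpha (\<lambda>z. 0) = (\<lambda>z. 0)"
  using ialpha_scale[OF good_zero, of 0] by simp
lemma ialpha_pow_zero: "(ialpha ^^ a) (\<lambda>z. 0) = (\<lambda>z. 0)"
  by (induction a) (auto simp: ialpha_zero)
lemma Dop_zero: "Dop (\<lambda>z. 0) = (\<lambda>z. 0)"
  using Dop_scale[OF good_zero, of 0] by simp

lemma Xpow_add: "Xpow \<delta> (m + a) b (Xpow \<delta> m a S) = Xpow \<delta> m (a + b) S"
  by (induction b) (auto simp: add.assoc)



definition homog :: "nat \<Rightarrow> 'n::finite symb \<Rightarrow> bool" where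
  "homog k f \<longleftrightarrow> (\<forall>x \<xi> (c::real). f (x, c *\<^sub>R \<xi>) = c ^ k * f (x, \<xi>))"

lemma homogD: "homog k f \<Longrightarrow> f (x, c *\<^sub>R \<xi>) = c ^ k * f (x, \<xi>)"
  unfolding homog_def by blast

lemma qc_scale[simp]: "qc (c *\<^sub>R \<xi>) i = c * qc \<xi> i" by (simp add: qc_def)
lemma pc_scale[simp]: "pc (c *\<^sub>R \<xi>) i = c * pc \<xi> i" by (simp add: pc_def)
lemma tc_scale[simp]: "tc (c *\<^sub>R \<xi>) = c * tc \<xi>" by (simp add: tc_def)

lemma homog_dx:
  assumes g: "good f" and h: "homog k f"
  shows "homog k (dx f e)"
  unfolding homog_def
proof (intro allI)
  fix x \<xi> and c :: real
  have eqf: "(\<lambda>h. f ((x, c *\<^sub>R \<xi>) + h *\<^sub>R (e, 0))) = (\<lambda>h. c ^ k * f ((x, \<xi>) + h *\<^sub>R (e, 0)))"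
  proof
    fix t :: real
    show "f ((x, c *\<^sub>R \<xi>) + t *\<^sub>R (e, 0)) = c ^ k * f ((x, \<xi>) + t *\<^sub>R (e, 0))"
      using homogD[OF h, of "x + t *\<^sub>R e" c \<xi>] by simp
  qed
  have "DERIV (\<lambda>h. c ^ k * f ((x, \<xi>) + h *\<^sub>R (e, 0))) 0 :> c ^ k * FD f (x, \<xi>) (e, 0)"
    by (intro DERIV_cmult hasderiv_line FD_works good_diffble g)
  then have "pdir f (e, 0) (x, c *\<^sub>R \<xi>) = c ^ k * FD f (x, \<xi>) (e, 0)"
    unfolding pdir_def eqf by (rule DERIV_imp_deriv)
  then show "dx f e (x, c *\<^sub>R \<xi>) = c ^ k * dx f e (x, \<xi>)"
    unfolding dx_def by (simp add: pdir_FD good_diffble g)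
qed

lemma Es_xi_scale: "Es_xi x (c *\<^sub>R \<xi>) = c * Es_xi x \<xi>"
  by (simp add: Es_xi_def sum_distrib_left algebra_simps)

lemma homog_Es: "good f \<Longrightarrow> homog k f \<Longrightarrow> Es f (x, c *\<^sub>R \<xi>) = c ^ k * Es f (x, \<xi>)"
proof -
  assume g: "good f" and h: "homog k f"
  have hx: "dx f e (x, c *\<^sub>R \<xi>) = c ^ k * dx f e (x, \<xi>)" for e
    using homogD[OF homog_dx[OF g h]] .
  show ?thesis by (simp add: Es_alt hx sum_distrib_left algebra_simps)
qed

lemma homog_Xop:
  assumes g: "good f" and h: "homog k f"
  shows "homog (Suc k) (Xop \<delta> m f)"
  unfolding homog_def
proof (intro allI)
  fix x \<xi> and c :: real
  have hx: "dx f e (x, c *\<^sub>R \<xi>) = c ^ k * dx f e (x, \<xi>)" for e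
    using homogD[OF homog_dx[OF g h]] .
  have hf: "f (x, c *\<^sub>R \<xi>) = c ^ k * f (x, \<xi>)" using homogD[OF h] .
  show "Xop \<delta> m f (x, c *\<^sub>R \<xi>) = c ^ Suc k * Xop \<delta> m f (x, \<xi>)"
    unfolding Xop_alt Dop_alt
    by (simp add: hx hf homog_Es[OF g h] Es_xi_scale sum_distrib_left algebra_simps)
qed

lemma homog_Xpow: "good f \<Longrightarrow> homog m f \<Longrightarrow> homog (m + l) (Xpow \<delta> m l f)"
  by (induction l) (auto intro: homog_Xop good_Xpow)

lemma zero_xi_decomp:
  "((0::'n::finite pt), \<xi>) = (\<Sum>i\<in>UNIV. qc \<xi> i *\<^sub>R (0, eq i)) + (\<Sum>i\<in>UNIV. pc \<xi> i *\<^sub>R (0, ep i)) + tc \<xi> *\<^sub>R (0, et)"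
proof -
  obtain a b t where xi: "\<xi> = (a, b, t)" by (cases \<xi>) auto
  have A: "(\<Sum>i\<in>UNIV. (a $ i) *\<^sub>R axis i (1::real)) = a"
    using basis_expansion[of a] by (simp add: scalar_mult_eq_scaleR)
  have B: "(\<Sum>i\<in>UNIV. (b $ i) *\<^sub>R axis i (1::real)) = b"
    using basis_expansion[of b] by (simp add: scalar_mult_eq_scaleR)
  have 1: "(\<Sum>i\<in>UNIV. qc \<xi> i *\<^sub>R ((0::'n pt), eq i)) = (0, a, 0, 0)"
    using A by (simp add: xi qc_def eq_def scaleR_prod_def sum_prod zero_prod_def)
  have 2: "(\<Sum>i\<in>UNIV. pc \<xi> i *\<^sub>R ((0::'n pt), ep i)) = (0, 0, b, 0)"
    using B by (simp add: xi pc_def ep_def scaleR_prod_def sum_prod zero_prod_def)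
  show ?thesis unfolding 1 2 by (simp add: xi tc_def et_def zero_prod_def)
qed

lemma euler:
  assumes g: "good f" and h: "homog k f"
  shows "(\<Sum>i\<in>UNIV. qc \<xi> i * dxi f (eq i) (x, \<xi>) + pc \<xi> i * dxi f (ep i) (x, \<xi>))
          + tc \<xi> * dxi f et (x, \<xi>) = real k * f (x, \<xi>)"
proof -
  let ?z = "(x, \<xi>)"
  have fd: "(f has_derivative FD f ?z) (at ?z)" by (intro FD_works good_diffble g)
  have lin: "linear (FD f ?z)" by (rule has_derivative_linear[OF fd])
  have D1: "DERIV (\<lambda>h. f (?z + h *\<^sub>R (0, \<xi>))) 0 :> FD f ?z (0, \<xi>)"
    by (rule hasderiv_line[OF fd])
  have eqf: "(\<lambda>h. f (?z + h *\<^sub>R (0, \<xi>))) = (\<lambda>h. (1 + h) ^ k * f ?z)"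
  proof
    fix t :: real
    have "?z + t *\<^sub>R (0, \<xi>) = (x, (1 + t) *\<^sub>R \<xi>)" by (simp add: algebra_simps)
    then show "f (?z + t *\<^sub>R (0, \<xi>)) = (1 + t) ^ k * f ?z"
      using homogD[OF h, of x "1 + t" \<xi>] by simp
  qed
  have "DERIV (\<lambda>h. (1 + h) ^ k * f ?z) 0 :> real k * (1 + 0) ^ (k - 1) * 1 * f ?z"
    by (intro DERIV_cmult_right DERIV_pow derivative_eq_intros) auto
  then have D2: "DERIV (\<lambda>h. f (?z + h *\<^sub>R (0, \<xi>))) 0 :> real k * f ?z" unfolding eqf by simp
  have "FD f ?z (0, \<xi>) = real k * f ?z" using DERIV_unique[OF D1 D2] .
  moreover have "FD f ?z (0, \<xi>) = (\<Sum>i\<in>UNIV. qc \<xi> i * FD f ?z (0, eq i) + pc \<xi> i * FD f ?z (0, ep i))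
          + tc \<xi> * FD f ?z (0, et)"
    by (subst zero_xi_decomp) (simp only: linear_add[OF lin] linear_sum[OF lin] linear_scale[OF lin] sum.distrib real_scaleR_def)
  ultimately show ?thesis
    by (simp add: dxi_def pdir_FD good_diffble g)
qed



lemma pdir_mult: "f differentiable (at z) \<Longrightarrow> g differentiable (at z) \<Longrightarrow>
   pdir (\<lambda>z. f z * g z) v z = f z * pdir g v z + pdir f v z * g z"
proof -
  assume a: "f differentiable (at z)" "g differentiable (at z)"
  have "pdir (\<lambda>z. f z * g z) v z = f z * FD g z v + FD f z v * g z"
    by (rule pdir_hasderiv[OF has_derivative_mult[OF FD_works[OF a(1)] FD_works[OF a(2)]]])
  then show ?thesis using a by (simp add: pdir_FD)
qed

lemma pdir_sum: "finite I \<Longrightarrow> (\<And>i. i \<in> I \<Longrightarrow> f i differentiable (at z)) \<Longrightarrow>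
   pdir (\<lambda>z. \<Sum>i\<in>I. f i z) v z = (\<Sum>i\<in>I. pdir (f i) v z)"
proof -
  assume a: "finite I" "\<And>i. i \<in> I \<Longrightarrow> f i differentiable (at z)"
  have "pdir (\<lambda>z. \<Sum>i\<in>I. f i z) v z = (\<Sum>i\<in>I. FD (f i) z v)"
    by (rule pdir_hasderiv[OF has_derivative_sum[OF FD_works[OF a(2)]]])
  then show ?thesis using a by (simp add: pdir_FD)
qed

lemma pdir_lin: "bounded_linear L \<Longrightarrow> pdir L v z = L v"
  by (rule pdir_hasderiv[OF bounded_linear_imp_has_derivative])

lemma bl_coords:
  "bounded_linear (\<lambda>z::'n::finite pt \<times> 'n pt. qc (fst z) i)"
  "bounded_linear (\<lambda>z::'n::finite pt \<times> 'n pt. pc (fst z) i)"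
  "bounded_linear (\<lambda>z::'n::finite pt \<times> 'n pt. tc (fst z))"
  "bounded_linear (\<lambda>z::'n::finite pt \<times> 'n pt. qc (snd z) i)"
  "bounded_linear (\<lambda>z::'n::finite pt \<times> 'n pt. pc (snd z) i)"
  "bounded_linear (\<lambda>z::'n::finite pt \<times> 'n pt. tc (snd z))"
  by (intro bounded_linear_compose[OF bl_qc] bounded_linear_compose[OF bl_pc]
     bounded_linear_compose[OF bl_tc] bounded_linear_fst bounded_linear_snd)+

lemma pdir_coords[simp]:
  "pdir (\<lambda>z::'n::finite pt \<times> 'n pt. qc (fst z) i) v z = qc (fst v) i"
  "pdir (\<lambda>z::'n::finite pt \<times> 'n pt. pc (fst z) i) v z = pc (fst v) i"
  "pdir (\<lambda>z::'n::finite pt \<times> 'n pt. tc (fst z)) v z = tc (fst v)"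
  "pdir (\<lambda>z::'n::finite pt \<times> 'n pt. qc (snd z) i) v z = qc (snd v) i"
  "pdir (\<lambda>z::'n::finite pt \<times> 'n pt. pc (snd z) i) v z = pc (snd v) i"
  "pdir (\<lambda>z::'n::finite pt \<times> 'n pt. tc (snd z)) v z = tc (snd v)"
  by (simp_all add: pdir_lin bl_coords)

lemma diff_coords[simp]:
  "(\<lambda>z::'n::finite pt \<times> 'n pt. qc (fst z) i) differentiable F"
  "(\<lambda>z::'n::finite pt \<times> 'n pt. pc (fst z) i) differentiable F"
  "(\<lambda>z::'n::finite pt \<times> 'n pt. tc (fst z)) differentiable F"
  "(\<lambda>z::'n::finite pt \<times> 'n pt. qc (snd z) i) differentiable F"
  "(\<lambda>z::'n::finite pt \<times> 'n pt. pc (snd z) i) differentiable F"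
  "(\<lambda>z::'n::finite pt \<times> 'n pt. tc (snd z)) differentiable F"
  by (simp_all add: bounded_linear_imp_differentiable bl_coords)

lemma coords_zero[simp]: "qc 0 i = 0" "pc 0 i = 0" "tc 0 = 0"
  by (simp_all add: qc_def pc_def tc_def)
lemma coords_basis[simp]:
  "qc (eq j) i = (if j = i then 1 else 0)" "pc (eq j) i = 0" "tc (eq j) = 0"
  "qc (ep j) i = 0" "pc (ep j) i = (if j = i then 1 else 0)" "tc (ep j) = 0"
  "qc et i = 0" "pc et i = 0" "tc et = 1"
  by (simp_all add: qc_def pc_def tc_def eq_def ep_def et_def axis_def)

lemma good_pdx[simp]: "good f \<Longrightarrow> e \<in> Basis \<Longrightarrow> good (pdir f (e, 0))"
  using good_dx unfolding dx_def by blast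
lemma good_pdxi[simp]: "good f \<Longrightarrow> e \<in> Basis \<Longrightarrow> good (pdir f (0, e))"
  using good_dxi unfolding dxi_def by blast
lemma good_diffble'[simp]: "good f \<Longrightarrow> f differentiable (at z)"
  by (rule good_diffble)
lemma pswap[simp]: "good f \<Longrightarrow> e \<in> Basis \<Longrightarrow> w \<in> Basis \<Longrightarrow>
   pdir (pdir f (e, 0)) (0, w) = pdir (pdir f (0, w)) (e, 0)"
  using good_swap[of f e w] unfolding dx_def dxi_def by simp

declare Basis_eq[simp] Basis_ep[simp] Basis_et[simp]

lemma dxi_Xop:
  fixes T :: "'n::finite symb"
  assumes g: "good T" and w: "w \<in> Basis"
  shows "dxi (Xop \<delta> k T) w z =
     (\<Sum>i\<in>UNIV. qc w i * dx T (ep i) z - pc w i * dx T (eq i) z) + tc w * Es T z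
      - Es_xi (fst z) w * dx T et z + Dop (dxi T w) z
      + (2 * (real CARD('n) + 1) * \<delta> + real k) * (tc w * T z + tc (snd z) * dxi T w z)"
  using g w
  unfolding Xop_alt Dop_alt Es_alt Es_xi_def dxi_def dx_def
  by (simp add: pdir_add pdir_diff pdir_mult pdir_sum pdir_scale algebra_simps sum.distrib sum_subtractf sum_distrib_left)



lemma mult_if_zero: "x * (if P then y else 0) = (if P then x * y else (0::real))"
  "(if P then y else 0) * x = (if P then y * x else (0::real))"
  by auto

lemma Dop_add: "good F \<Longrightarrow> good G \<Longrightarrow> Dop (\<lambda>z. F z + G z) = (\<lambda>z. Dop F z + Dop G z)"
  by (rule ext) (simp add: Dop_alt Es_alt dx_def pdir_add algebra_simps sum.distrib sum_subtractf)

lemma Dop_diff: "good F \<Longrightarrow> good G \<Longrightarrow> Dop (\<lambda>z. F z - G z) = (\<lambda>z. Dop F z - Dop G z)"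
  by (rule ext) (simp add: Dop_alt Es_alt dx_def pdir_diff algebra_simps sum.distrib sum_subtractf)

lemma Dop_sum: "finite I \<Longrightarrow> (\<And>i. i \<in> I \<Longrightarrow> good (F i)) \<Longrightarrow>
   Dop (\<lambda>z. \<Sum>i\<in>I. F i z) = (\<lambda>z. \<Sum>i\<in>I. Dop (F i) z)"
proof (induction I rule: finite_induct)
  case empty then show ?case by (simp add: Dop_zero)
next
  case (insert x I)
  then have "Dop (\<lambda>z. F x z + (\<Sum>i\<in>I. F i z)) = (\<lambda>z. Dop (F x) z + Dop (\<lambda>z. \<Sum>i\<in>I. F i z) z)"
    by (intro Dop_add good_sum) auto
  then show ?case using insert by simp
qed

lemma Dop_pcf: "good F \<Longrightarrow> Dop (\<lambda>z. pc (fst z) j * F z) z =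
   pc (fst z) j * Dop F z + (qc (snd z) j + tc (snd z) * pc (fst z) j) * F z"
  apply (simp add: Dop_alt Es_alt dx_def pdir_mult distrib_left sum.distrib sum_subtractf mult_if_zero)
  apply (simp add: algebra_simps sum.distrib sum_subtractf sum_distrib_left)
  done

lemma Dop_qcf: "good F \<Longrightarrow> Dop (\<lambda>z. qc (fst z) j * F z) z =
   qc (fst z) j * Dop F z + (- pc (snd z) j + tc (snd z) * qc (fst z) j) * F z"
  apply (simp add: Dop_alt Es_alt dx_def pdir_mult distrib_left sum.distrib sum_subtractf mult_if_zero)
  apply (simp add: algebra_simps sum.distrib sum_subtractf sum_distrib_left)
  done



declare good_dxi[simp] good_dx[simp] good_pcf[simp] good_qcf[simp] good_diff[simp] good_sum[simp]

lemma Dop_ialpha: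
  assumes g: "good T"
  shows "Dop (ialpha T) z = 1/2 * ((\<Sum>j\<in>UNIV. (pc (fst z) j * Dop (dxi T (eq j)) z
        + (qc (snd z) j + tc (snd z) * pc (fst z) j) * dxi T (eq j) z)
      - (qc (fst z) j * Dop (dxi T (ep j)) z + (- pc (snd z) j + tc (snd z) * qc (fst z) j) * dxi T (ep j) z))
      - Dop (dxi T et) z)"
proof -
  define F where "F = (\<lambda>z. (\<Sum>i\<in>UNIV. pc (fst z) i * dxi T (eq i) z - qc (fst z) i * dxi T (ep i) z) - dxi T et z)"
  have ia: "ialpha T = (\<lambda>z. 1/2 * F z)" by (simp add: ialpha_alt F_def)
  have gF: "good F" using g by (simp add: F_def)
  have "Dop (ialpha T) z = 1/2 * Dop F z" by (simp only: ia Dop_scale[OF gF])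
  also have "Dop F z = (\<Sum>j\<in>UNIV. (pc (fst z) j * Dop (dxi T (eq j)) z
        + (qc (snd z) j + tc (snd z) * pc (fst z) j) * dxi T (eq j) z)
      - (qc (fst z) j * Dop (dxi T (ep j)) z + (- pc (snd z) j + tc (snd z) * qc (fst z) j) * dxi T (ep j) z))
      - Dop (dxi T et) z"
    using g unfolding F_def by (simp add: Dop_diff Dop_sum Dop_pcf Dop_qcf)
  finally show ?thesis .
qed



lemma XQ: "good T \<Longrightarrow> dxi (Xop \<delta> k T) (eq j) z = dx T (ep j) z - qc (fst z) j * dx T et z + Dop (dxi T (eq j)) z
   + (2 * (real CARD('n) + 1) * \<delta> + real k) * (tc (snd z) * dxi T (eq j) z)"
  for T :: "'n::finite symb"
  by (simp add: dxi_Xop Es_xi_def mult_if_zero sum_negf)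

lemma XP: "good T \<Longrightarrow> dxi (Xop \<delta> k T) (ep j) z = - dx T (eq j) z - pc (fst z) j * dx T et z + Dop (dxi T (ep j)) z
   + (2 * (real CARD('n) + 1) * \<delta> + real k) * (tc (snd z) * dxi T (ep j) z)"
  for T :: "'n::finite symb"
  by (simp add: dxi_Xop Es_xi_def mult_if_zero sum_negf)

lemma Xt: "good T \<Longrightarrow> dxi (Xop \<delta> k T) et z = Es T z + Dop (dxi T et) z
   + (2 * (real CARD('n) + 1) * \<delta> + real k) * (T z + tc (snd z) * dxi T et z)"
  for T :: "'n::finite symb"
  by (simp add: dxi_Xop Es_xi_def mult_if_zero sum_negf)

lemma comm:
  fixes T :: "'n::finite symb"
  assumes g: "good T" and h: "homog k T"
  shows "ialpha (Xop \<delta> k T) z = Dop (ialpha T) z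
     + (2 * (real CARD('n) + 1) * \<delta> + real k - 1) * tc (snd z) * ialpha T z
     - ((real CARD('n) + 1) * \<delta> + real k) * T z"
proof -
  obtain x \<xi> where z: "z = (x, \<xi>)" by (cases z) blast
  define C where "C = 2 * (real CARD('n) + 1) * \<delta> + real k"
  define S1 where "S1 = (\<Sum>j\<in>UNIV. pc x j * Dop (dxi T (eq j)) z - qc x j * Dop (dxi T (ep j)) z)"
  define S2 where "S2 = (\<Sum>j\<in>UNIV. qc \<xi> j * dxi T (eq j) z + pc \<xi> j * dxi T (ep j) z)"
  define S3 where "S3 = (\<Sum>j\<in>UNIV. pc x j * dxi T (eq j) z - qc x j * dxi T (ep j) z)"
  define e where "e = dxi T et z"
  have "(\<Sum>j\<in>UNIV. pc x j * dxi (Xop \<delta> k T) (eq j) z - qc x j * dxi (Xop \<delta> k T) (ep j) z)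
     = (\<Sum>j\<in>UNIV. (pc x j * Dop (dxi T (eq j)) z - qc x j * Dop (dxi T (ep j)) z)
          + (pc x j * dx T (ep j) z + qc x j * dx T (eq j) z)
          + C * tc \<xi> * (pc x j * dxi T (eq j) z - qc x j * dxi T (ep j) z))"
    by (rule sum.cong) (auto simp: XQ XP g z C_def algebra_simps)
  also have "\<dots> = S1 + Es T z + C * tc \<xi> * S3"
    by (simp add: sum.distrib sum_distrib_left S1_def S3_def Es_alt z)
  finally have L0: "(\<Sum>j\<in>UNIV. pc x j * dxi (Xop \<delta> k T) (eq j) z - qc x j * dxi (Xop \<delta> k T) (ep j) z)
     = S1 + Es T z + C * tc \<xi> * S3" .
  have L: "ialpha (Xop \<delta> k T) z = 1/2 * ((S1 + Es T z + C * tc \<xi> * S3)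
       - (Es T z + Dop (dxi T et) z + C * (T z + tc \<xi> * e)))"
    using L0 by (simp add: ialpha_alt z Xt g C_def e_def)
  have "(\<Sum>j\<in>UNIV. (pc x j * Dop (dxi T (eq j)) z
        + (qc \<xi> j + tc \<xi> * pc x j) * dxi T (eq j) z)
      - (qc x j * Dop (dxi T (ep j)) z + (- pc \<xi> j + tc \<xi> * qc x j) * dxi T (ep j) z))
     = (\<Sum>j\<in>UNIV. (pc x j * Dop (dxi T (eq j)) z - qc x j * Dop (dxi T (ep j)) z)
        + (qc \<xi> j * dxi T (eq j) z + pc \<xi> j * dxi T (ep j) z)
        + tc \<xi> * (pc x j * dxi T (eq j) z - qc x j * dxi T (ep j) z))"
    by (rule sum.cong) (auto simp: algebra_simps)
  also have "\<dots> = S1 + S2 + tc \<xi> * S3"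
    by (simp add: sum.distrib sum_distrib_left S1_def S2_def S3_def)
  finally have R0: "(\<Sum>j\<in>UNIV. (pc x j * Dop (dxi T (eq j)) z
        + (qc \<xi> j + tc \<xi> * pc x j) * dxi T (eq j) z)
      - (qc x j * Dop (dxi T (ep j)) z + (- pc \<xi> j + tc \<xi> * qc x j) * dxi T (ep j) z))
     = S1 + S2 + tc \<xi> * S3" .
  have R: "Dop (ialpha T) z = 1/2 * ((S1 + S2 + tc \<xi> * S3) - Dop (dxi T et) z)"
    using Dop_ialpha[OF g, of z] R0 unfolding z by simp
  have I: "ialpha T z = 1/2 * (S3 - e)"
    by (simp add: ialpha_alt z S3_def e_def)
  have E: "S2 = real k * T z - tc \<xi> * e"
    using euler[OF g h, of \<xi> x] unfolding S2_def e_def z by simp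
  show ?thesis
    unfolding L R I by (simp add: E C_def z field_simps)
qed



definition Qf :: "nat \<Rightarrow> real \<Rightarrow> nat \<Rightarrow> nat \<Rightarrow> nat \<Rightarrow> real" where
  "Qf n \<delta> m a b = (\<Prod>i<a. rr n \<delta> (b - i) m)"

lemma rr_0[simp]: "rr n \<delta> 0 k = 0" by (simp add: rr_def)

lemma Qf_0[simp]: "Qf n \<delta> m 0 b = 1" by (simp add: Qf_def)
lemma Qf_Suc: "Qf n \<delta> m (Suc a) b = Qf n \<delta> m a b * rr n \<delta> (b - a) m"
  by (simp add: Qf_def)
lemma Qf_zero: "b < a \<Longrightarrow> Qf n \<delta> m a b = 0"
  unfolding Qf_def by (rule prod_zero) (auto intro!: bexI[of _ b])

lemma bb_0[simp]: "bb n \<delta> j 0 = 1" by (simp add: bb_def)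
lemma bb_Suc: "bb n \<delta> j (Suc l) = bb n \<delta> j l * inverse (- rr n \<delta> (Suc l) (j - Suc l))"
  by (simp add: bb_def inverse_mult_distrib)

lemma rr_split:
  assumes "l \<le> b + 1"
  shows "rr n \<delta> (b + 1) m = rr n \<delta> l (m + b + 1 - l) + rr n \<delta> (b + 1 - l) m"
proof -
  have 1: "real (m + b + 1 - l) = real m + real b + 1 - real l" using assms by linarith
  have 2: "real (b + 1 - l) = real b + 1 - real l" using assms by linarith
  show ?thesis unfolding rr_def 1 2 by (simp add: field_simps)
qed

lemma coeff_identity:
  fixes n m b :: nat and \<delta> :: real
  defines "j \<equiv> m + b + 1"
  assumes nz: "\<And>l. 1 \<le> l \<Longrightarrow> l \<le> j \<Longrightarrow> rr n \<delta> l (j - l) \<noteq> 0"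
  shows "- (\<Sum>l=1..j. bb n \<delta> j l * Qf n \<delta> m (l - 1) b) = inverse (rr n \<delta> (b + 1) m)"
proof -
  define R where "R = rr n \<delta> (b + 1) m"
  have Rnz: "R \<noteq> 0" using nz[of "b+1"] unfolding R_def j_def by simp
  define H where "H l = - (Qf n \<delta> m (l - 1) b * bb n \<delta> j (l - 1)) / R" for l
  have step: "bb n \<delta> j l * Qf n \<delta> m (l - 1) b = - (H (Suc l) - H l)" if l: "1 \<le> l" "l \<le> j" for l
  proof (cases "l \<le> b + 1")
    case True
    obtain l' where l': "l = Suc l'" using l by (cases l) auto
    have nzl: "rr n \<delta> l (j - l) \<noteq> 0" using nz l by auto
    have sp: "R = rr n \<delta> l (j - l) + rr n \<delta> (b - l') m"
      using rr_split[OF True, of n \<delta> m] l' unfolding R_def j_def by simp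
    have bbS: "bb n \<delta> j l = bb n \<delta> j l' * inverse (- rr n \<delta> l (j - l))"
      using bb_Suc[of n \<delta> j l'] l' by simp
    have QS: "Qf n \<delta> m l b = Qf n \<delta> m l' b * rr n \<delta> (b - l') m" using Qf_Suc l' by simp
    have aux: "B * inverse (- a) * Q = - (- (Q * c * (B * inverse (- a))) / (a + c) - - (Q * B) / (a + c))"
      if "a \<noteq> 0" "a + c \<noteq> 0" for a c B Q :: real
    proof -
      define D where "D = a + c"
      have c: "c = D - a" and D: "D \<noteq> 0" using that by (auto simp: D_def)
      show ?thesis unfolding D_def[symmetric] unfolding c using that(1) D by (simp add: field_simps)
    qed
    have "H (Suc l) = - (Qf n \<delta> m l' b * rr n \<delta> (b - l') m * (bb n \<delta> j l' * inverse (- rr n \<delta> l (j - l))))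
          / (rr n \<delta> l (j - l) + rr n \<delta> (b - l') m)"
      unfolding H_def by (simp only: diff_Suc_1 QS bbS sp)
    moreover have "H l = - (Qf n \<delta> m l' b * bb n \<delta> j l') / (rr n \<delta> l (j - l) + rr n \<delta> (b - l') m)"
      unfolding H_def by (simp only: l' diff_Suc_1 sp)
    moreover have "bb n \<delta> j l * Qf n \<delta> m (l - 1) b = bb n \<delta> j l' * inverse (- rr n \<delta> l (j - l)) * Qf n \<delta> m l' b"
      using bbS l' by simp
    ultimately show ?thesis using aux[of "rr n \<delta> l (j - l)" "rr n \<delta> (b - l') m"] nzl Rnz sp by simp
  next
    case False
    then have "Qf n \<delta> m (l - 1) b = 0" "Qf n \<delta> m l b = 0" by (auto intro: Qf_zero)
    then show ?thesis unfolding H_def using l by (cases l) auto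
  qed
  have "(\<Sum>l=1..j. bb n \<delta> j l * Qf n \<delta> m (l - 1) b) = (\<Sum>l=1..j. - (H (Suc l) - H l))"
    using step by (intro sum.cong) auto
  also have "\<dots> = - (H (Suc j) - H 1)"
  proof -
    have T: "(\<Sum>l=1..j. H (Suc l) - H l) = H (Suc j) - H 1" by (rule sum_Suc_diff) (simp add: j_def)
    show ?thesis by (simp only: sum_negf T)
  qed
  also have "H (Suc j) = 0" unfolding H_def by (simp add: Qf_zero j_def)
  also have "H 1 = - 1 / R" unfolding H_def by simp
  finally show ?thesis unfolding R_def by (simp add: divide_inverse)
qed



lemma good_iapow: "good F \<Longrightarrow> good ((ialpha ^^ a) F)"
  by (induction a) (auto intro: good_ialpha)

lemma iapow_scale: "good F \<Longrightarrow> (ialpha ^^ a) (\<lambda>z. c * F z) = (\<lambda>z. c * (ialpha ^^ a) F z)"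
  by (induction a) (auto simp: ialpha_scale good_iapow)

context
  fixes S :: "'n::finite symb" and m :: nat and \<delta> :: real
  assumes gS: "good S" and hS: "homog m S" and iS: "ialpha S = (\<lambda>_. 0)"
begin

lemma gX: "good (Xpow \<delta> m b S)" by (rule good_Xpow[OF gS])

lemma ia_X: "ialpha (Xpow \<delta> m b S) = (\<lambda>z. rr CARD('n) \<delta> b m * Xpow \<delta> m (b - 1) S z)"
proof (induction b)
  case 0 then show ?case by (simp add: iS)
next
  case (Suc b)
  define N where "N = real CARD('n)"
  have hX: "homog (m + b) (Xpow \<delta> m b S)" by (rule homog_Xpow[OF gS hS])
  show ?case
  proof (rule ext)
    fix z
    have "ialpha (Xpow \<delta> m (Suc b) S) z = Dop (ialpha (Xpow \<delta> m b S)) z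
       + (2 * (N + 1) * \<delta> + real (m + b) - 1) * tc (snd z) * ialpha (Xpow \<delta> m b S) z
       - ((N + 1) * \<delta> + real (m + b)) * Xpow \<delta> m b S z"
      using comm[OF gX hX, of \<delta> z] by (simp add: N_def)
    also have "\<dots> = rr CARD('n) \<delta> b m * (Dop (Xpow \<delta> m (b - 1) S) z
       + (2 * (N + 1) * \<delta> + real (m + b) - 1) * tc (snd z) * Xpow \<delta> m (b - 1) S z)
       - ((N + 1) * \<delta> + real (m + b)) * Xpow \<delta> m b S z"
      by (simp add: Suc.IH Dop_scale gX algebra_simps)
    also have "\<dots> = rr CARD('n) \<delta> (Suc b) m * Xpow \<delta> m b S z"
    proof (cases b)
      case 0 then show ?thesis by (simp add: rr_def N_def field_simps)
    next
      case (Suc b')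
      have X: "Xpow \<delta> m b S z = Dop (Xpow \<delta> m b' S) z
          + (2 * (N + 1) * \<delta> + real (m + b') ) * tc (snd z) * Xpow \<delta> m b' S z"
        by (simp add: Suc Xop_alt N_def)
      have r: "rr CARD('n) \<delta> (Suc b) m = rr CARD('n) \<delta> b m - ((N + 1) * \<delta> + real (m + b))"
        by (simp add: rr_def N_def Suc field_simps)
      show ?thesis unfolding r X by (simp add: Suc algebra_simps)
    qed
    finally show "ialpha (Xpow \<delta> m (Suc b) S) z = rr CARD('n) \<delta> (Suc b) m * Xpow \<delta> m (Suc b - 1) S z"
      by simp
  qed
qed

lemma iapow_X: "(ialpha ^^ a) (Xpow \<delta> m b S) = (\<lambda>z. Qf CARD('n) \<delta> m a b * Xpow \<delta> m (b - a) S z)"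
proof (induction a)
  case 0 then show ?case by simp
next
  case (Suc a)
  have "(ialpha ^^ Suc a) (Xpow \<delta> m b S) = ialpha (\<lambda>z. Qf CARD('n) \<delta> m a b * Xpow \<delta> m (b - a) S z)"
    by (simp add: Suc.IH)
  also have "\<dots> = (\<lambda>z. Qf CARD('n) \<delta> m a b * (rr CARD('n) \<delta> (b - a) m * Xpow \<delta> m (b - a - 1) S z))"
    by (simp add: ialpha_scale gX ia_X)
  finally show ?case by (simp add: Qf_Suc mult.assoc)
qed

lemma sop_X:
  assumes nz: "\<And>l. 1 \<le> l \<Longrightarrow> l \<le> m + b + 1 \<Longrightarrow> rr CARD('n) \<delta> l (m + b + 1 - l) \<noteq> 0"
  shows "sop \<delta> (m + b) (\<lambda>z. c * Xpow \<delta> m b S z)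
       = (\<lambda>z. inverse (rr CARD('n) \<delta> (b + 1) m) * c * Xpow \<delta> m (b + 1) S z)"
proof (rule ext)
  fix z
  have tm: "Xpow \<delta> (m + b + 1 - l) l ((ialpha ^^ (l - 1)) (\<lambda>z. c * Xpow \<delta> m b S z)) z
      = c * Qf CARD('n) \<delta> m (l - 1) b * Xpow \<delta> m (b + 1) S z" if l: "1 \<le> l" for l
  proof -
    have "(ialpha ^^ (l - 1)) (\<lambda>z. c * Xpow \<delta> m b S z)
        = (\<lambda>z. (c * Qf CARD('n) \<delta> m (l - 1) b) * Xpow \<delta> m (b - (l - 1)) S z)"
      by (simp add: iapow_scale gX iapow_X mult.assoc)
    then have "Xpow \<delta> (m + b + 1 - l) l ((ialpha ^^ (l - 1)) (\<lambda>z. c * Xpow \<delta> m b S z)) z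
       = (c * Qf CARD('n) \<delta> m (l - 1) b) * Xpow \<delta> (m + b + 1 - l) l (Xpow \<delta> m (b - (l - 1)) S) z"
      by (simp add: Xpow_scale gX)
    also have "\<dots> = c * Qf CARD('n) \<delta> m (l - 1) b * Xpow \<delta> m (b + 1) S z"
    proof (cases "l - 1 \<le> b")
      case True
      then have e1: "m + b + 1 - l = m + (b - (l - 1))" and e2: "b - (l - 1) + l = b + 1" using l by auto
      show ?thesis by (simp only: e1 Xpow_add e2)
    next
      case False then show ?thesis by (simp add: Qf_zero)
    qed
    finally show ?thesis .
  qed
  have "sop \<delta> (m + b) (\<lambda>z. c * Xpow \<delta> m b S z) z
     = - (\<Sum>l=1..m + b + 1. bb CARD('n) \<delta> (m + b + 1) l * (c * Qf CARD('n) \<delta> m (l - 1) b * Xpow \<delta> m (b + 1) S z))"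
    unfolding sop_def using tm by (simp add: add.commute add.left_commute)
  also have "\<dots> = (- (\<Sum>l=1..m + b + 1. bb CARD('n) \<delta> (m + b + 1) l * Qf CARD('n) \<delta> m (l - 1) b)) * c * Xpow \<delta> m (b + 1) S z"
  proof -
    have gen: "(\<Sum>l\<in>A. f l * (c * g l * X)) = (\<Sum>l\<in>A. f l * g l) * c * X" for A :: "nat set" and f g :: "nat \<Rightarrow> real" and X
      by (simp add: sum_distrib_right sum_distrib_left ac_simps)
    show ?thesis by (simp only: gen minus_mult_left)
  qed
  also have "\<dots> = inverse (rr CARD('n) \<delta> (b + 1) m) * c * Xpow \<delta> m (b + 1) S z"
    using coeff_identity[of m b "CARD('n)" \<delta>] nz by simp
  finally show "sop \<delta> (m + b) (\<lambda>z. c * Xpow \<delta> m b S z) z = inverse (rr CARD('n) \<delta> (b + 1) m) * c * Xpow \<delta> m (b + 1) S z" .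
qed

lemma spow_X:
  assumes nz: "\<And>j l. j \<le> m + L \<Longrightarrow> 1 \<le> l \<Longrightarrow> l \<le> j \<Longrightarrow> rr CARD('n) \<delta> l (j - l) \<noteq> 0"
  shows "b \<le> L \<Longrightarrow> spow \<delta> m b S = (\<lambda>z. inverse (\<Prod>i=1..b. rr CARD('n) \<delta> i m) * Xpow \<delta> m b S z)"
proof (induction b)
  case 0 then show ?case by simp
next
  case (Suc b)
  have "spow \<delta> m (Suc b) S = sop \<delta> (m + b) (\<lambda>z. inverse (\<Prod>i=1..b. rr CARD('n) \<delta> i m) * Xpow \<delta> m b S z)"
    using Suc by simp
  also have "\<dots> = (\<lambda>z. inverse (rr CARD('n) \<delta> (b + 1) m) * inverse (\<Prod>i=1..b. rr CARD('n) \<delta> i m) * Xpow \<delta> m (b + 1) S z)"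
    by (rule sop_X) (use nz Suc.prems in auto)
  finally show ?case by (simp add: inverse_mult_distrib mult.commute)
qed

end



lemma monom_scale: "\<alpha> \<in> multi_idx k \<Longrightarrow> monom_xi \<alpha> (c *\<^sub>R \<xi>) = c ^ k * monom_xi \<alpha> \<xi>"
  for \<xi> :: "'a::euclidean_space"
proof -
  assume a: "\<alpha> \<in> multi_idx k"
  have "monom_xi \<alpha> (c *\<^sub>R \<xi>) = (\<Prod>b\<in>Basis. c ^ \<alpha> b * (\<xi> \<bullet> b) ^ \<alpha> b)"
    by (simp add: monom_xi_def power_mult_distrib)
  also have "\<dots> = (\<Prod>b\<in>(Basis::'a set). c ^ \<alpha> b) * monom_xi \<alpha> \<xi>"
    by (simp add: monom_xi_def prod.distrib)
  also have "(\<Prod>b\<in>(Basis::'a set). c ^ \<alpha> b) = c ^ k"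
    using a by (simp add: multi_idx_def power_sum[symmetric])
  finally show ?thesis .
qed

lemma Sk_rep:
  assumes "S \<in> Sk k"
  obtains a where "\<forall>\<alpha>\<in>multi_idx k. smooth (a \<alpha>)"
    "S = (\<lambda>z. \<Sum>\<alpha>\<in>multi_idx k. a \<alpha> (fst z) * monom_xi \<alpha> (snd z))"
proof -
  from assms obtain a where a: "\<forall>\<alpha>\<in>multi_idx k. smooth (a \<alpha>)"
    "\<forall>x \<xi>. S (x, \<xi>) = (\<Sum>\<alpha>\<in>multi_idx k. a \<alpha> x * monom_xi \<alpha> \<xi>)"
    unfolding Sk_def by blast
  have "S = (\<lambda>z. \<Sum>\<alpha>\<in>multi_idx k. a \<alpha> (fst z) * monom_xi \<alpha> (snd z))"
  proof
    fix z :: "'a pt \<times> 'a pt"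
    show "S z = (\<Sum>\<alpha>\<in>multi_idx k. a \<alpha> (fst z) * monom_xi \<alpha> (snd z))"
      using spec[OF spec[OF a(2), of "fst z"], of "snd z"] by simp
  qed
  then show ?thesis using a(1) that by blast
qed

lemma Sk_good: "S \<in> Sk k \<Longrightarrow> good S"
proof -
  assume "S \<in> Sk k"
  then obtain a where a: "\<forall>\<alpha>\<in>multi_idx k. smooth (a \<alpha>)"
    and S: "S = (\<lambda>z. \<Sum>\<alpha>\<in>multi_idx k. a \<alpha> (fst z) * monom_xi \<alpha> (snd z))"
    by (rule Sk_rep)
  show ?thesis
  proof (cases "finite (multi_idx k :: ('a pt \<Rightarrow> nat) set)")
    case True
    then show ?thesis unfolding S using a
      by (intro good_sum gprod smooth_sm sm_monom) auto
  next
    case False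
    then show ?thesis unfolding S by (simp add: good_zero)
  qed
qed

lemma Sk_homog: "S \<in> Sk k \<Longrightarrow> homog k S"
proof -
  assume "S \<in> Sk k"
  then obtain a where S: "S = (\<lambda>z. \<Sum>\<alpha>\<in>multi_idx k. a \<alpha> (fst z) * monom_xi \<alpha> (snd z))"
    by (rule Sk_rep)
  show ?thesis unfolding homog_def S
    by (simp add: monom_scale sum_distrib_left ac_simps cong: sum.cong)
qed

lemma rr_nz:
  assumes d: "\<delta> \<notin> (\<Union>j\<in>{1..k}. Iset N j)"
    and j: "1 \<le> j" "j \<le> k" and l: "1 \<le> l" "l \<le> j"
  shows "rr N \<delta> l (j - l) \<noteq> 0"
proof
  assume "rr N \<delta> l (j - l) = 0"
  then have "2 * (real N + 1) * \<delta> + 2 * real (j - l) + real l - 1 = 0"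
    using l by (simp add: rr_def)
  moreover have "real (j - l) = real j - real l" using l by simp
  ultimately have e: "\<delta> = - (2 * real j - real l - 1) / (2 * (real N + 1))"
    by (simp add: field_simps)
  define p where "p = 2 * j - l - 1"
  have rp: "real p = 2 * real j - real l - 1" using j l unfolding p_def by linarith
  have "p \<in> {j - 1 .. 2 * j - 2}" using j l unfolding p_def by auto
  then have "\<delta> \<in> Iset N j" unfolding Iset_def e rp[symmetric] by blast
  then show False using d j by auto
qed



theorem proposition5p3:
  fixes \<delta> :: real and k l :: nat and S :: "'n::finite symb"
  assumes "k \<ge> 1" and "1 \<le> l" and "l \<le> k"
    and "\<delta> \<notin> (\<Union>j\<in>{1..k}. Iset CARD('n) j)"
    and "S \<in> Rsp \<delta> (k - l)" and "ialpha S = (\<lambda>_. 0)"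
  shows "spow \<delta> (k - l) l S
         = (\<lambda>z. inverse (\<Prod>i=1..l. rr CARD('n) \<delta> i (k - l)) * Xpow \<delta> (k - l) l S z)"
proof -
  have gS: "good S" using assms(5) by (simp add: Rsp_def Sk_good)
  have hS: "homog (k - l) S" using assms(5) by (simp add: Rsp_def Sk_homog)
  have nz: "rr CARD('n) \<delta> l' (j - l') \<noteq> 0" if "j \<le> (k - l) + l" "1 \<le> l'" "l' \<le> j" for j l'
    using rr_nz[OF assms(4)] that assms(3) by auto
  show ?thesis by (rule spow_X[OF gS hS assms(6) nz order_refl]) auto
qed


end
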